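(* Let $n,m,p,q\ge 1$ be integers and let $A\in\mathbb{R}^{n\times n}$, $B\in\mathbb{R}^{n\times m}$, $C\in\mathbb{R}^{p\times n}$. Consider the linear system $$\delta x_t = A\,\delta x_{t-1} + B\,\delta u_{t-1},\qquad \delta z_t = C\,\delta x_t ,$$ with states $\delta x_t\in\mathbb{R}^n$, inputs $\delta u_t\in\mathbb{R}^m$ and outputs $\delta z_t\in\mathbb{R}^p$. Define the $qp\times n$ matrix $$\mathcal{O}_q = \begin{bmatrix} CA^{q-1}\\ CA^{q-2}\\ \vdots\\ CA\\ C\end{bmatrix},$$ and the $qp\times qm$ block matrix $\mathcal{H}_q$ whose $(i,j)$ block ($i,j=1,\dots,q$, blocks of size $p\times m$) equals $CA^{j-i-1}B$ if $j>i$ and $0$ if $j\le i$. Suppose $\mathcal{O}_q$ has full column rank, and let $\mathcal{O}_q^+$ denote its Moore–Penrose pseudoinverse. Define $p\times p$ matrices $\alpha_{t-1},\dots,\alpha_{t-q}$ and $p\times m$ matrices $\beta_{t-1},\dots,\beta_{t-q}$ by $$[\alpha_{t-1}\,|\,\alpha_{t-2}\,|\cdots|\,\alpha_{t-q}] = CA^{q}\mathcal{O}_q^+,$$ $$[\beta_{t-1}\,|\,\beta_{t-2}\,|\cdots|\,\beta_{t-q}] = \begin{bmatrix} CB & CAB & \cdots & CA^{q-1}B\end{bmatrix} - CA^{q}\mathcal{O}_q^+\mathcal{H}_q .$$ Then every trajectory of the system exactly satisfies the ARMA model of order $q$: $$\delta z_t = \alpha_{t-1}\delta z_{t-1}+\cdots+\alpha_{t-q}\delta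 z_{t-q} + \beta_{t-1}\delta u_{t-1}+\cdots+\beta_{t-q}\delta u_{t-q}$$ for all $t$ for which the indices $t-1,\dots,t-q$ are defined.
   Context: The subscripts on $\alpha$ and $\beta$ only indicate which past output/input each coefficient multiplies; for this time-invariant system the coefficients do not depend on $t$. The blocks of $CA^q\mathcal{O}_q^+$ (size $p\times p$) and of the right-hand side of the $\beta$ equation (size $p\times m$) are read left to right. *)

theory Defs
  imports "Jordan_Normal_Form.DL_Rank"
begin

text \<open>Extended observability matrix O_q (qp x n): block row i (i = 0..q-1) is C A^(q-1-i).\<close>
definition obs_mat :: "real mat \<Rightarrow> real mat \<Rightarrow> nat \<Rightarrow> real mat" where
  "obs_mat A C q =
     mat (q * dim_row C) (dim_col A)
       (\<lambda>(i, j). (C * A ^\<^sub>m (q - 1 - i div dim_row C)) $$ (i mod dim_row C, j))"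

text \<open>Block Toeplitz matrix H_q (qp x qm): block (i,j) (0-based) is C A^(j-i-1) B if j > i, else 0.\<close>
definition toep_mat :: "real mat \<Rightarrow> real mat \<Rightarrow> real mat \<Rightarrow> nat \<Rightarrow> real mat" where
  "toep_mat A B C q =
     mat (q * dim_row C) (q * dim_col B)
       (\<lambda>(i, j). if j div dim_col B > i div dim_row C
                 then (C * A ^\<^sub>m (j div dim_col B - i div dim_row C - 1) * B)
                        $$ (i mod dim_row C, j mod dim_col B)
                 else 0)"

definition markov_row :: "real mat \<Rightarrow> real mat \<Rightarrow> real mat \<Rightarrow> nat \<Rightarrow> real mat" where
  "markov_row A B C q =
     mat (dim_row C) (q * dim_col B)
       (\<lambda>(i, j). (C * A ^\<^sub>m (j div dim_col B) * B) $$ (i, j mod dim_col B))"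

definition is_mp_pinv :: "real mat \<Rightarrow> real mat \<Rightarrow> bool" where
  "is_mp_pinv M X \<longleftrightarrow> X \<in> carrier_mat (dim_col M) (dim_row M) \<and>
      M * X * M = M \<and> X * M * X = X \<and>
      transpose_mat (M * X) = M * X \<and> transpose_mat (X * M) = X * M"

definition mp_pinv :: "real mat \<Rightarrow> real mat" where
  "mp_pinv M = (THE X. is_mp_pinv M X)"

definition col_block :: "real mat \<Rightarrow> nat \<Rightarrow> nat \<Rightarrow> real mat" where
  "col_block M w k = mat (dim_row M) w (\<lambda>(i, j). M $$ (i, k * w + j))"

end

theory Submission
  imports Defs
begin


lemma (in vec_space) full_rank_inj:
  assumes M: "M \<in> carrier_mat n nc" and r: "rank M = nc"
    and v: "v \<in> carrier_vec nc" and Mv: "M *\<^sub>v v = 0\<^sub>v n"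
  shows "v = 0\<^sub>v nc"
proof (rule ccontr)
  assume nz: "v \<noteq> 0\<^sub>v nc"
  have dist: "distinct (cols M)"
  proof (rule ccontr)
    assume nd: "\<not> distinct (cols M)"
    obtain S where S: "maximal S (\<lambda>T. T \<subseteq> set (cols M) \<and> lin_indpt T)"
      using maximal_exists[of "(\<lambda>T. T \<subseteq> set (cols M) \<and> lin_indpt T)" "card (set (cols M))" "{}"]
      by (meson List.finite_set card_mono empty_iff empty_subsetI finite_lin_indpt2 rev_finite_subset)
    then have "card S \<le> card (set (cols M))" by (simp add: card_mono maximal_def)
    then have "card S < nc"
      using M cols_length card_length nd card_distinct carrier_matD(2) nat_less_le
      by (metis dual_order.antisym dual_order.trans)
    then show False using rank_card_indpt[OF M S] r by simp
  qed
  have "lin_indpt (set (cols M))" using full_rank_lin_indpt[OF M r dist] .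
  then show False using lin_depI[OF M v nz Mv dist] by blast
qed



lemma self_scalar_zero:
  fixes w :: "real vec"
  assumes "w \<in> carrier_vec N" "w \<bullet> w = 0" shows "w = 0\<^sub>v N"
proof -
  have "(\<Sum>i\<in>{0..<N}. w $ i * w $ i) = 0" using assms by (simp add: scalar_prod_def)
  then have "\<forall>i\<in>{0..<N}. w $ i * w $ i = 0"
    by (subst (asm) sum_nonneg_eq_0_iff) auto
  then show ?thesis using assms(1) by (intro eq_vecI) auto
qed

lemma pinv_left:
  fixes M :: "real mat"
  assumes M: "M \<in> carrier_mat N n"
    and inj: "\<And>v. v \<in> carrier_vec n \<Longrightarrow> M *\<^sub>v v = 0\<^sub>v N \<Longrightarrow> v = 0\<^sub>v n"
  shows "mp_pinv M * M = 1\<^sub>m n \<and> mp_pinv M \<in> carrier_mat n N"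
proof -
  define K where "K = transpose_mat M * M"
  have K: "K \<in> carrier_mat n n" using M by (simp add: K_def)
  have Kinj: "v = 0\<^sub>v n" if v: "v \<in> carrier_vec n" and Kv: "K *\<^sub>v v = 0\<^sub>v n" for v
  proof -
    have "K *\<^sub>v v = transpose_mat M *\<^sub>v (M *\<^sub>v v)"
      unfolding K_def using M v by (simp add: assoc_mult_mat_vec)
    then have "transpose_mat M *\<^sub>v (M *\<^sub>v v) = 0\<^sub>v n" using Kv by simp
    then have "0 = (transpose_mat M *\<^sub>v (M *\<^sub>v v)) \<bullet> v" using v by simp
    also have "\<dots> = (M *\<^sub>v v) \<bullet> (M *\<^sub>v v)"
      using transpose_vec_mult_scalar[OF M v, of "M *\<^sub>v v"] M v by simp
    finally have "M *\<^sub>v v = 0\<^sub>v N" using M v by (intro self_scalar_zero) auto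
    then show ?thesis using inj v by blast
  qed
  have "det K \<noteq> 0" using det_0_iff_vec_prod_zero_field[OF K] Kinj by blast
  from det_non_zero_imp_unit[OF K this, of "()"]
  obtain G where G: "G \<in> carrier_mat n n" "G * K = 1\<^sub>m n" "K * G = 1\<^sub>m n"
    unfolding Units_def ring_mat_def by auto
  have Ksym: "transpose_mat K = K" unfolding K_def using M by (simp add: transpose_mult)
  have Gsym: "transpose_mat G = G"
  proof -
    have "transpose_mat (K * G) = 1\<^sub>m n" using G by simp
    then have "transpose_mat G * K = 1\<^sub>m n" using transpose_mult[OF K G(1)] Ksym by simp
    then have "transpose_mat G * K * G = G" using G by simp
    then show ?thesis using G K by (metis assoc_mult_mat right_mult_one_mat transpose_carrier_mat)
  qed
  define X where "X = G * transpose_mat M"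
  have X: "X \<in> carrier_mat n N" using G M by (simp add: X_def)
  have XM: "X * M = 1\<^sub>m n" unfolding X_def using G M K_def
    by (metis assoc_mult_mat transpose_carrier_mat)
  have isX: "is_mp_pinv M X"
    unfolding is_mp_pinv_def
  proof (intro conjI)
    show "X \<in> carrier_mat (dim_col M) (dim_row M)" using X M by simp
    show "M * X * M = M" using XM M X by (simp add: assoc_mult_mat[OF M X M])
    show "X * M * X = X" using XM X by simp
    show "transpose_mat (X * M) = X * M" using XM by simp
    have "M * X = M * G * transpose_mat M" unfolding X_def using M G by (simp add: assoc_mult_mat)
    have GMt: "G * transpose_mat M \<in> carrier_mat n N" using G M by simp
    have "transpose_mat (M * X) = transpose_mat (G * transpose_mat M) * transpose_mat M"
      unfolding X_def using transpose_mult[OF M GMt] .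
    also have "\<dots> = (M * transpose_mat G) * transpose_mat M"
      using transpose_mult[OF G(1), of "transpose_mat M" N] M by simp
    also have "\<dots> = M * X" unfolding X_def using Gsym M G by (simp add: assoc_mult_mat)
    finally show "transpose_mat (M * X) = M * X" .
  qed
  have uniq: "Y = X" if Y: "is_mp_pinv M Y" for Y
  proof -
    have Yc: "Y \<in> carrier_mat n N" and MYM: "M * Y * M = M" and symY: "transpose_mat (M * Y) = M * Y"
      using Y M unfolding is_mp_pinv_def by auto
    have YM: "Y * M = 1\<^sub>m n"
    proof (rule eq_matI)
      fix i j assume ij: "i < dim_row (1\<^sub>m n)" "j < dim_col (1\<^sub>m n)"
      define D where "D = Y * M - 1\<^sub>m n"
      have D: "D \<in> carrier_mat n n" using Yc M unfolding D_def by (intro minus_carrier_mat) auto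
      have "M * D = M * (Y * M) - M * 1\<^sub>m n" unfolding D_def using M Yc
        by (metis mult_minus_distrib_mat mult_carrier_mat one_carrier_mat)
      also have "\<dots> = 0\<^sub>m N n" using MYM M Yc by (simp add: assoc_mult_mat[OF M Yc M])
      finally have MD: "M * D = 0\<^sub>m N n" .
      have "M *\<^sub>v col D j = col (M * D) j" using col_mult2[OF M D, of j] ij by simp
      also have "\<dots> = 0\<^sub>v N" using MD ij by auto
      finally have cz: "M *\<^sub>v col D j = 0\<^sub>v N" .
      have cc: "col D j \<in> carrier_vec n" using D by (metis carrier_matD(1) carrier_vecI dim_col)
      have "col D j = 0\<^sub>v n" using inj[OF cc cz] .
      moreover have "D $$ (i, j) = col D j $ i" using ij D by auto
      ultimately have "D $$ (i, j) = 0" using ij by simp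
      then show "(Y * M) $$ (i, j) = 1\<^sub>m n $$ (i, j)" using ij D Yc M unfolding D_def by simp
    qed (insert Yc M, auto)
    have MX: "M * X \<in> carrier_mat N N" using M X by simp
    have MY: "M * Y \<in> carrier_mat N N" using M Yc by simp
    have "M * Y = M * X"
    proof -
      have "M * Y = transpose_mat (M * X * M * Y)" using symY isX M X Yc
        unfolding is_mp_pinv_def by simp
      also have "\<dots> = transpose_mat ((M * X) * (M * Y))"
        using assoc_mult_mat[OF MX M Yc] by simp
      also have "\<dots> = transpose_mat (M * Y) * transpose_mat (M * X)"
        using transpose_mult[OF MX MY] .
      also have "\<dots> = M * Y * (M * X)" using symY isX unfolding is_mp_pinv_def by simp
      also have "\<dots> = M * Y * M * X" using assoc_mult_mat[OF MY M X] by simp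
      also have "\<dots> = M * (Y * M) * X" using assoc_mult_mat[OF M Yc M] by simp
      also have "\<dots> = M * X" using M YM by simp
      finally show ?thesis .
    qed
    have "Y = Y * M * Y" using Y unfolding is_mp_pinv_def by simp
    also have "\<dots> = Y * (M * X)" using `M * Y = M * X` Yc M by (simp add: assoc_mult_mat[OF Yc M Yc])
    also have "\<dots> = X" using YM Yc M X by (simp add: assoc_mult_mat[OF Yc M X,symmetric])
    finally show ?thesis .
  qed
  have "mp_pinv M = X" unfolding mp_pinv_def using isX uniq by (rule the_equality)
  then show ?thesis using XM X by simp
qed



definition stk :: "nat \<Rightarrow> nat \<Rightarrow> (nat \<Rightarrow> real vec) \<Rightarrow> real vec" where
  "stk q w f = vec (q * w) (\<lambda>i. f (i div w) $ (i mod w))"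

lemma sum_split_blocks:
  fixes g :: "nat \<Rightarrow> real"
  shows "(\<Sum>i<q * w. g i) = (\<Sum>k<q. \<Sum>c<w. g (k * w + c))"
proof (induction q)
  case 0 then show ?case by simp
next
  case (Suc q)
  have st: "{..<q * w + w} = {..<q * w} \<union> {q * w..<q * w + w}" by auto
  have "(\<Sum>i<Suc q * w. g i) = (\<Sum>i<q * w + w. g i)" by (simp add: add.commute)
  also have "\<dots> = sum g ({..<q * w} \<union> {q * w..<q * w + w})"
    by (simp only: st)
  also have "\<dots> = (\<Sum>i<q * w. g i) + (\<Sum>i\<in>{q * w..<q * w + w}. g i)"
    by (rule sum.union_disjoint) auto
  also have "(\<Sum>i\<in>{q * w..<q * w + w}. g i) = (\<Sum>c<w. g (q * w + c))"
    by (simp add: sum.atLeastLessThan_shift_0 atLeast0LessThan add.commute)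
  finally show ?case using Suc by simp
qed

lemma mv_stk:
  assumes "dim_col M = q * w" "i < dim_row M"
  shows "(M *\<^sub>v stk q w f) $ i = (\<Sum>k<q. \<Sum>c<w. M $$ (i, k * w + c) * f k $ c)"
proof -
  have "(M *\<^sub>v stk q w f) $ i = (\<Sum>j<q * w. M $$ (i, j) * stk q w f $ j)"
    using assms by (simp add: scalar_prod_def stk_def atLeast0LessThan)
  also have "\<dots> = (\<Sum>k<q. \<Sum>c<w. M $$ (i, k * w + c) * stk q w f $ (k * w + c))"
    by (rule sum_split_blocks)
  also have "\<dots> = (\<Sum>k<q. \<Sum>c<w. M $$ (i, k * w + c) * f k $ c)"
  proof (intro sum.cong refl)
    fix k c assume "k \<in> {..<q}" "c \<in> {..<w}"
    then have kq: "k < q" and cw: "c < w" by auto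
    have "Suc k * w \<le> q * w" using kq by (intro mult_le_mono1) simp
    then have "k * w + c < q * w" using cw by simp
    moreover have "(k * w + c) div w = k" using cw by simp
    moreover have "(k * w + c) mod w = c" using cw by simp
    ultimately show "M $$ (i, k * w + c) * stk q w f $ (k * w + c) = M $$ (i, k * w + c) * f k $ c"
      by (simp add: stk_def)
  qed
  finally show ?thesis .
qed

lemma mv_index:
  assumes "v \<in> carrier_vec w" "i < dim_row M" "dim_col M = w"
  shows "(M *\<^sub>v v) $ i = (\<Sum>c<w. M $$ (i, c) * v $ c)"
  using assms by (simp add: scalar_prod_def atLeast0LessThan)

lemma pow_Suc_left:
  assumes A: "A \<in> carrier_mat n n"
  shows "A * A ^\<^sub>m k = A ^\<^sub>m (Suc k)"
proof (induction k)
  case 0 then show ?case using A by simp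
next
  case (Suc k)
  have "A * A ^\<^sub>m Suc k = A * (A ^\<^sub>m k * A)" by simp
  also have "\<dots> = A * A ^\<^sub>m k * A" using A by (simp add: assoc_mult_mat[of A n n _ n A n])
  finally show ?case using Suc by simp
qed

lemma traj:
  assumes A: "A \<in> carrier_mat n n" and B: "B \<in> carrier_mat n m"
    and xs: "x s \<in> carrier_vec n"
    and u_dim: "\<And>t. u t \<in> carrier_vec m"
    and dyn: "\<And>t. t \<ge> 1 \<Longrightarrow> x t = A *\<^sub>v x (t - 1) + B *\<^sub>v u (t - 1)"
    and xc: "\<And>t. x t \<in> carrier_vec n"
  shows "D \<in> carrier_mat p n \<Longrightarrow> i < p \<Longrightarrow> (D *\<^sub>v x (s + r)) $ i
     = (D * A ^\<^sub>m r *\<^sub>v x s) $ i + (\<Sum>l<r. (D * A ^\<^sub>m (r - 1 - l) * B *\<^sub>v u (s + l)) $ i)"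
proof (induction r arbitrary: D)
  case 0
  have dA: "dim_row A = n" using A by blast
  have "D * A ^\<^sub>m 0 = D" using right_mult_one_mat[OF 0(1)] dA by simp
  then show ?case by simp
next
  case (Suc r)
  have D: "D \<in> carrier_mat p n" by fact
  have DA: "D * A \<in> carrier_mat p n" using D A by simp
  have "x (s + Suc r) = A *\<^sub>v x (s + r) + B *\<^sub>v u (s + r)" using dyn[of "s + Suc r"] by simp
  then have "D *\<^sub>v x (s + Suc r) = D *\<^sub>v (A *\<^sub>v x (s + r)) + D *\<^sub>v (B *\<^sub>v u (s + r))"
    using D A B xc u_dim by (simp add: mult_add_distrib_mat_vec[of D p n])
  also have "\<dots> = (D * A) *\<^sub>v x (s + r) + (D * B) *\<^sub>v u (s + r)"
    using D A B xc u_dim by (simp add: assoc_mult_mat_vec[of _ p n])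
  finally have e: "(D *\<^sub>v x (s + Suc r)) $ i = ((D * A) *\<^sub>v x (s + r)) $ i + ((D * B) *\<^sub>v u (s + r)) $ i"
    using Suc.prems D A B by simp
  have "D * A * A ^\<^sub>m r = D * A ^\<^sub>m Suc r"
    using D A pow_Suc_left[OF A] by (simp add: assoc_mult_mat[of D p n A n _ n])
  moreover have "(\<Sum>l<r. (D * A * A ^\<^sub>m (r - 1 - l) * B *\<^sub>v u (s + l)) $ i)
      = (\<Sum>l<r. (D * A ^\<^sub>m (Suc r - 1 - l) * B *\<^sub>v u (s + l)) $ i)"
  proof (intro sum.cong refl)
    fix l assume "l \<in> {..<r}"
    then have "Suc (r - 1 - l) = Suc r - 1 - l" by auto
    then have "D * A * A ^\<^sub>m (r - 1 - l) = D * A ^\<^sub>m (Suc r - 1 - l)"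
      using D A pow_Suc_left[OF A, of "r - 1 - l"] by (simp add: assoc_mult_mat[of D p n A n _ n])
    then show "(D * A * A ^\<^sub>m (r - 1 - l) * B *\<^sub>v u (s + l)) $ i = (D * A ^\<^sub>m (Suc r - 1 - l) * B *\<^sub>v u (s + l)) $ i"
      by simp
  qed
  ultimately have IH': "((D * A) *\<^sub>v x (s + r)) $ i = (D * A ^\<^sub>m Suc r *\<^sub>v x s) $ i
      + (\<Sum>l<r. (D * A ^\<^sub>m (Suc r - 1 - l) * B *\<^sub>v u (s + l)) $ i)"
    using Suc.IH[OF DA Suc.prems(2)] by simp
  have dA: "dim_row A = n" using A by blast
  have T: "D * A ^\<^sub>m (Suc r - 1 - r) * B = D * B" using right_mult_one_mat[OF D] dA by simp
  have S: "(\<Sum>l<Suc r. (D * A ^\<^sub>m (Suc r - 1 - l) * B *\<^sub>v u (s + l)) $ i)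
     = (\<Sum>l<r. (D * A ^\<^sub>m (Suc r - 1 - l) * B *\<^sub>v u (s + l)) $ i) + ((D * B) *\<^sub>v u (s + r)) $ i"
    by (simp only: sum.lessThan_Suc T)
  show ?case unfolding S e IH' by (simp only: add.assoc)
qed


lemma reidx_if:
  fixes f :: "nat \<Rightarrow> real"
  assumes "k < q"
  shows "(\<Sum>j<q. if k < j then f j else 0) = (\<Sum>l<q - 1 - k. f (q - 1 - l))"
proof -
  have "(\<Sum>j<q. if k < j then f j else 0) = sum f {j\<in>{..<q}. k < j}"
    using sum.inter_filter[of "{..<q}" f "\<lambda>j. k < j"] by simp
  also have "\<dots> = (\<Sum>l<q - 1 - k. f (q - 1 - l))"
    by (rule sum.reindex_bij_witness[of _ "\<lambda>j. q - 1 - j" "\<lambda>l. q - 1 - l"]) (use assms in auto)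
  finally show ?thesis .
qed

lemma reidx_rev:
  fixes f :: "nat \<Rightarrow> real"
  shows "(\<Sum>l<N. f (N - 1 - l)) = (\<Sum>j<N. f j)"
  using sum.nat_diff_reindex[of f N] by simp

lemma col_block_mv:
  assumes "v \<in> carrier_vec w" "r < dim_row N"
  shows "(col_block N w j *\<^sub>v v) $ r = (\<Sum>c<w. N $$ (r, j * w + c) * v $ c)"
proof -
  have "(col_block N w j *\<^sub>v v) $ r = (\<Sum>c<w. col_block N w j $$ (r, c) * v $ c)"
    by (rule mv_index) (use assms in \<open>auto simp: col_block_def\<close>)
  also have "\<dots> = (\<Sum>c<w. N $$ (r, j * w + c) * v $ c)"
    using assms by (auto simp: col_block_def intro!: sum.cong)
  finally show ?thesis .
qed

theorem proposition1:
  fixes n m p q :: nat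
    and A B C :: "real mat"
    and x u :: "nat \<Rightarrow> real vec"
    and z :: "nat \<Rightarrow> real vec"
    and \<alpha> \<beta> :: "nat \<Rightarrow> real mat"
  assumes "n \<ge> 1" "m \<ge> 1" "p \<ge> 1" "q \<ge> 1"
    and A: "A \<in> carrier_mat n n"
    and B: "B \<in> carrier_mat n m"
    and C: "C \<in> carrier_mat p n"
    and rank: "vec_space.rank (q * p) (obs_mat A C q) = n"
    and alpha: "\<And>k. k \<in> {1..q} \<Longrightarrow> \<alpha> k = col_block (C * A ^\<^sub>m q * mp_pinv (obs_mat A C q)) p (k - 1)"
    and beta: "\<And>k. k \<in> {1..q} \<Longrightarrow> \<beta> k = col_block (markov_row A B C q
                    - C * A ^\<^sub>m q * mp_pinv (obs_mat A C q) * toep_mat A B C q) m (k - 1)"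
    and x0: "x 0 \<in> carrier_vec n"
    and u_dim: "\<And>t. u t \<in> carrier_vec m"
    and dyn: "\<And>t. t \<ge> 1 \<Longrightarrow> x t = A *\<^sub>v x (t - 1) + B *\<^sub>v u (t - 1)"
    and out: "\<And>t. z t = C *\<^sub>v x t"
  shows "\<forall>t \<ge> q. z t = finsum_vec TYPE(real) p (\<lambda>k. \<alpha> k *\<^sub>v z (t - k)) {1..q}
                       + finsum_vec TYPE(real) p (\<lambda>k. \<beta> k *\<^sub>v u (t - k)) {1..q}"
proof (intro allI impI)
  fix t assume tq: "q \<le> t"
  have xc: "x t' \<in> carrier_vec n" for t'
  proof (induction t')
    case 0 then show ?case using x0 .
  next
    case (Suc t')
    then show ?case using dyn[of "Suc t'"] A B u_dim[of t'] by simp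
  qed
  have zc: "z t' \<in> carrier_vec p" for t' using out[of t'] C xc[of t'] by simp
  have dC: "dim_row C = p" "dim_col C = n" using C by auto
  have dA: "dim_row A = n" "dim_col A = n" using A by auto
  have dB: "dim_row B = n" "dim_col B = m" using B by auto
  define s where "s = t - q"
  define Ob where "Ob = obs_mat A C q"
  define H where "H = toep_mat A B C q"
  define Mk where "Mk = markov_row A B C q"
  define Pi where "Pi = mp_pinv Ob"
  define P where "P = C * A ^\<^sub>m q * Pi"
  define Z where "Z = stk q p (\<lambda>k. z (t - 1 - k))"
  define U where "U = stk q m (\<lambda>k. u (t - 1 - k))"
  define y where "y = x s"
  have Obc: "Ob \<in> carrier_mat (q * p) n" unfolding Ob_def obs_mat_def using dC dA by simp
  have Hc: "H \<in> carrier_mat (q * p) (q * m)" unfolding H_def toep_mat_def using dC dB by simp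
  have Mkc: "Mk \<in> carrier_mat p (q * m)" unfolding Mk_def markov_row_def using dC dB by simp
  have inj: "v = 0\<^sub>v n" if "v \<in> carrier_vec n" "Ob *\<^sub>v v = 0\<^sub>v (q * p)" for v
    using vec_space.full_rank_inj[OF Obc rank[folded Ob_def] that] .
  have PiOb: "Pi * Ob = 1\<^sub>m n" and Pic: "Pi \<in> carrier_mat n (q * p)"
    using pinv_left[OF Obc inj] unfolding Pi_def by auto
  have CAq: "C * A ^\<^sub>m q \<in> carrier_mat p n" using C A by simp
  have Pc: "P \<in> carrier_mat p (q * p)" unfolding P_def using CAq Pic by simp
  have POb: "P * Ob = C * A ^\<^sub>m q"
    unfolding P_def using assoc_mult_mat[OF CAq Pic Obc] PiOb right_mult_one_mat[OF CAq] by simp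
  have Zc: "Z \<in> carrier_vec (q * p)" unfolding Z_def stk_def by simp
  have Uc: "U \<in> carrier_vec (q * m)" unfolding U_def stk_def by simp
  have yc: "y \<in> carrier_vec n" unfolding y_def using xc .
  have trj: "\<And>D i r. D \<in> carrier_mat p n \<Longrightarrow> i < p \<Longrightarrow> (D *\<^sub>v x (s + r)) $ i
     = (D * A ^\<^sub>m r *\<^sub>v x s) $ i + (\<Sum>l<r. (D * A ^\<^sub>m (r - 1 - l) * B *\<^sub>v u (s + l)) $ i)"
    by (rule traj[where x=x and u=u and s=s, OF A B xc u_dim dyn xc])
  have Zeq: "Z = Ob *\<^sub>v y + H *\<^sub>v U"
  proof (rule eq_vecI)
    show "dim_vec Z = dim_vec (Ob *\<^sub>v y + H *\<^sub>v U)" using Zc Obc Hc by simp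
    fix i assume "i < dim_vec (Ob *\<^sub>v y + H *\<^sub>v U)"
    then have i: "i < q * p" using Obc Hc by simp
    define k where "k = i div p"
    define r where "r = i mod p"
    have kq: "k < q" unfolding k_def using i by (simp add: less_mult_imp_div_less)
    have rp: "r < p" unfolding r_def using \<open>p \<ge> 1\<close> by simp
    have tk: "t - 1 - k = s + (q - 1 - k)" unfolding s_def using kq tq by simp
    have "Z $ i = z (t - 1 - k) $ r" unfolding Z_def stk_def k_def r_def using i by simp
    also have "\<dots> = (C *\<^sub>v x (s + (q - 1 - k))) $ r" using out tk by simp
    also have "\<dots> = (C * A ^\<^sub>m (q - 1 - k) *\<^sub>v y) $ r
        + (\<Sum>l<q - 1 - k. (C * A ^\<^sub>m (q - 1 - k - 1 - l) * B *\<^sub>v u (s + l)) $ r)"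
      unfolding y_def by (rule trj[OF C rp])
    also have "(C * A ^\<^sub>m (q - 1 - k) *\<^sub>v y) $ r = (Ob *\<^sub>v y) $ i"
    proof -
      have "(Ob *\<^sub>v y) $ i = (\<Sum>c<n. Ob $$ (i, c) * y $ c)" using mv_index[OF yc] Obc i by simp
      also have "\<dots> = (\<Sum>c<n. (C * A ^\<^sub>m (q - 1 - k)) $$ (r, c) * y $ c)"
        by (intro sum.cong refl) (simp add: Ob_def obs_mat_def i dC dA k_def r_def)
      also have "\<dots> = (C * A ^\<^sub>m (q - 1 - k) *\<^sub>v y) $ r"
        using mv_index[OF yc, of r "C * A ^\<^sub>m (q - 1 - k)"] rp dC dA by simp
      finally show ?thesis by simp
    qed
    also have "(\<Sum>l<q - 1 - k. (C * A ^\<^sub>m (q - 1 - k - 1 - l) * B *\<^sub>v u (s + l)) $ r) = (H *\<^sub>v U) $ i"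
    proof -
      have "(H *\<^sub>v U) $ i = (\<Sum>j<q. \<Sum>c<m. H $$ (i, j * m + c) * u (t - 1 - j) $ c)"
        unfolding U_def using mv_stk Hc i by simp
      also have "\<dots> = (\<Sum>j<q. if k < j then (C * A ^\<^sub>m (j - k - 1) * B *\<^sub>v u (t - 1 - j)) $ r else 0)"
      proof (intro sum.cong refl)
        fix j assume j: "j \<in> {..<q}"
        have jm: "j * m + c < q * m" if "c < m" for c
        proof -
          have "Suc j * m \<le> q * m" using j by (intro mult_le_mono1) simp
          then show ?thesis using that by simp
        qed
        have e: "H $$ (i, j * m + c) = (if k < j then (C * A ^\<^sub>m (j - k - 1) * B) $$ (r, c) else 0)"
          if "c < m" for c
          using that jm[OF that] i unfolding H_def toep_mat_def dC dB k_def r_def by simp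
        show "(\<Sum>c<m. H $$ (i, j * m + c) * u (t - 1 - j) $ c) =
          (if k < j then (C * A ^\<^sub>m (j - k - 1) * B *\<^sub>v u (t - 1 - j)) $ r else 0)"
        proof (cases "k < j")
          case True
          then show ?thesis using e mv_index[OF u_dim, of r "C * A ^\<^sub>m (j - k - 1) * B"] rp dC dB
            by simp
        next
          case False
          then show ?thesis using e by simp
        qed
      qed
      also have "\<dots> = (\<Sum>l<q - 1 - k. (C * A ^\<^sub>m (q - 1 - l - k - 1) * B *\<^sub>v u (t - 1 - (q - 1 - l))) $ r)"
        by (rule reidx_if[OF kq])
      also have "\<dots> = (\<Sum>l<q - 1 - k. (C * A ^\<^sub>m (q - 1 - k - 1 - l) * B *\<^sub>v u (s + l)) $ r)"
      proof (intro sum.cong refl)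
        fix l assume l: "l \<in> {..<q - 1 - k}"
        have "q - 1 - l - k - 1 = q - 1 - k - 1 - l" by simp
        moreover have "t - 1 - (q - 1 - l) = s + l" unfolding s_def using l tq by auto
        ultimately show "(C * A ^\<^sub>m (q - 1 - l - k - 1) * B *\<^sub>v u (t - 1 - (q - 1 - l))) $ r =
          (C * A ^\<^sub>m (q - 1 - k - 1 - l) * B *\<^sub>v u (s + l)) $ r" by simp
      qed
      finally show ?thesis by simp
    qed
    finally show "Z $ i = (Ob *\<^sub>v y + H *\<^sub>v U) $ i" using i Obc Hc by simp
  qed
  have zeq: "z t = (C * A ^\<^sub>m q) *\<^sub>v y + Mk *\<^sub>v U"
  proof (rule eq_vecI)
    show "dim_vec (z t) = dim_vec ((C * A ^\<^sub>m q) *\<^sub>v y + Mk *\<^sub>v U)" using zc Mkc CAq by simp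
    fix r assume "r < dim_vec ((C * A ^\<^sub>m q) *\<^sub>v y + Mk *\<^sub>v U)"
    then have rp: "r < p" using Mkc by simp
    have ts: "t = s + q" unfolding s_def using tq by simp
    have "z t $ r = (C *\<^sub>v x (s + q)) $ r" using out ts by simp
    also have "\<dots> = (C * A ^\<^sub>m q *\<^sub>v y) $ r
        + (\<Sum>l<q. (C * A ^\<^sub>m (q - 1 - l) * B *\<^sub>v u (s + l)) $ r)"
      unfolding y_def by (rule trj[OF C rp])
    also have "(\<Sum>l<q. (C * A ^\<^sub>m (q - 1 - l) * B *\<^sub>v u (s + l)) $ r) = (Mk *\<^sub>v U) $ r"
    proof -
      have "(Mk *\<^sub>v U) $ r = (\<Sum>j<q. \<Sum>c<m. Mk $$ (r, j * m + c) * u (t - 1 - j) $ c)"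
        unfolding U_def using mv_stk Mkc rp by simp
      also have "\<dots> = (\<Sum>j<q. (C * A ^\<^sub>m j * B *\<^sub>v u (t - 1 - j)) $ r)"
      proof (intro sum.cong refl)
        fix j assume j: "j \<in> {..<q}"
        have jm: "j * m + c < q * m" if "c < m" for c
        proof -
          have "Suc j * m \<le> q * m" using j by (intro mult_le_mono1) simp
          then show ?thesis using that by simp
        qed
        have e: "Mk $$ (r, j * m + c) = (C * A ^\<^sub>m j * B) $$ (r, c)" if "c < m" for c
          using that jm[OF that] rp unfolding Mk_def markov_row_def dC dB by simp
        show "(\<Sum>c<m. Mk $$ (r, j * m + c) * u (t - 1 - j) $ c) = (C * A ^\<^sub>m j * B *\<^sub>v u (t - 1 - j)) $ r"
          using e mv_index[OF u_dim, of r "C * A ^\<^sub>m j * B"] rp dC dB by simp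
      qed
      also have "\<dots> = (\<Sum>l<q. (C * A ^\<^sub>m (q - 1 - l) * B *\<^sub>v u (t - 1 - (q - 1 - l))) $ r)"
        by (rule reidx_rev[symmetric])
      also have "\<dots> = (\<Sum>l<q. (C * A ^\<^sub>m (q - 1 - l) * B *\<^sub>v u (s + l)) $ r)"
      proof (intro sum.cong refl)
        fix l assume l: "l \<in> {..<q}"
        have "t - 1 - (q - 1 - l) = s + l" unfolding s_def using l tq by auto
        then show "(C * A ^\<^sub>m (q - 1 - l) * B *\<^sub>v u (t - 1 - (q - 1 - l))) $ r =
          (C * A ^\<^sub>m (q - 1 - l) * B *\<^sub>v u (s + l)) $ r" by simp
      qed
      finally show ?thesis by simp
    qed
    finally show "z t $ r = ((C * A ^\<^sub>m q) *\<^sub>v y + Mk *\<^sub>v U) $ r" using rp Mkc CAq by simp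
  qed
  have blk: "finsum_vec TYPE(real) p (\<lambda>k. G k *\<^sub>v f (t - k)) {1..q} = N *\<^sub>v stk q w (\<lambda>k. f (t - 1 - k))"
    if N: "N \<in> carrier_mat p (q * w)" and fc: "\<And>t'. f t' \<in> carrier_vec w"
      and G: "\<And>k. k \<in> {1..q} \<Longrightarrow> G k = col_block N w (k - 1)" for N w f G
  proof -
    have cl: "(\<lambda>k. G k *\<^sub>v f (t - k)) \<in> {1..q} \<rightarrow> carrier_vec p"
      using N G by (auto simp: col_block_def intro!: carrier_vecI)
    show ?thesis
    proof (rule eq_vecI)
      show "dim_vec (finsum_vec TYPE(real) p (\<lambda>k. G k *\<^sub>v f (t - k)) {1..q}) = dim_vec (N *\<^sub>v stk q w (\<lambda>k. f (t - 1 - k)))"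
        using N finsum_vec_closed[OF cl] by simp
      fix r assume "r < dim_vec (N *\<^sub>v stk q w (\<lambda>k. f (t - 1 - k)))"
      then have rp: "r < p" using N by simp
      have "finsum_vec TYPE(real) p (\<lambda>k. G k *\<^sub>v f (t - k)) {1..q} $ r
         = (\<Sum>k\<in>{1..q}. (G k *\<^sub>v f (t - k)) $ r)"
        by (rule index_finsum_vec[OF _ rp cl]) simp
      also have "\<dots> = (\<Sum>k\<in>{1..q}. (col_block N w (k - 1) *\<^sub>v f (t - k)) $ r)"
        using G by simp
      also have "\<dots> = (\<Sum>j<q. (col_block N w j *\<^sub>v f (t - 1 - j)) $ r)"
        using sum.atLeast1_atMost_eq[of "\<lambda>k. (col_block N w (k - 1) *\<^sub>v f (t - k)) $ r" q] by simp
      also have "\<dots> = (\<Sum>j<q. \<Sum>c<w. N $$ (r, j * w + c) * f (t - 1 - j) $ c)"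
        using col_block_mv[OF fc] rp N by simp
      also have "\<dots> = (N *\<^sub>v stk q w (\<lambda>k. f (t - 1 - k))) $ r"
        using mv_stk[of N q w r] N rp by simp
      finally show "finsum_vec TYPE(real) p (\<lambda>k. G k *\<^sub>v f (t - k)) {1..q} $ r = (N *\<^sub>v stk q w (\<lambda>k. f (t - 1 - k))) $ r" .
    qed
  qed
  have PHc: "P * H \<in> carrier_mat p (q * m)" using Pc Hc by simp
  have MPH: "Mk - P * H \<in> carrier_mat p (q * m)" using minus_carrier_mat[OF PHc] .
  have s1: "finsum_vec TYPE(real) p (\<lambda>k. \<alpha> k *\<^sub>v z (t - k)) {1..q} = P *\<^sub>v Z"
    unfolding Z_def by (rule blk[OF Pc zc]) (simp add: alpha P_def Pi_def Ob_def)
  have s2: "finsum_vec TYPE(real) p (\<lambda>k. \<beta> k *\<^sub>v u (t - k)) {1..q} = (Mk - P * H) *\<^sub>v U"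
    unfolding U_def by (rule blk[OF MPH u_dim]) (simp add: beta P_def Pi_def Ob_def Mk_def H_def)
  have HU: "H *\<^sub>v U \<in> carrier_vec (q * p)" using Hc Uc by simp
  have Oy: "Ob *\<^sub>v y \<in> carrier_vec (q * p)" using Obc yc by simp
  have "P *\<^sub>v Z + (Mk - P * H) *\<^sub>v U = P *\<^sub>v (Ob *\<^sub>v y) + P *\<^sub>v (H *\<^sub>v U) + (Mk *\<^sub>v U - P *\<^sub>v (H *\<^sub>v U))"
    unfolding Zeq using mult_add_distrib_mat_vec[OF Pc Oy HU] minus_mult_distrib_mat_vec[OF Mkc PHc Uc]
      assoc_mult_mat_vec[OF Pc Hc Uc] by simp
  also have "\<dots> = (P * Ob) *\<^sub>v y + Mk *\<^sub>v U"
    using assoc_mult_mat_vec[OF Pc Obc yc] Pc Mkc HU Uc Oy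
    by (intro eq_vecI) auto
  also have "\<dots> = z t" using zeq POb by simp
  finally show "z t = finsum_vec TYPE(real) p (\<lambda>k. \<alpha> k *\<^sub>v z (t - k)) {1..q}
                       + finsum_vec TYPE(real) p (\<lambda>k. \<beta> k *\<^sub>v u (t - k)) {1..q}"
    using s1 s2 by simp
qed

end
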